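(* Let $\equiv$ be the equivalence relation on $\mathfrak S_n$ generated by the pattern replacements $321\equiv231$ and $312\equiv132$: i.e., for letters $a<b<c$ occupying three consecutive positions of a permutation, one may replace $cba$ by $bca$ (and conversely) and $cab$ by $acb$ (and conversely). Then for $\sigma,\tau\in\mathfrak S_n$, one has $\mathrm{SC}(\sigma^{-1})=\mathrm{SC}(\tau^{-1})$ if and only if $\sigma\equiv\tau$.
   Context: Permutations are words $\sigma_1\cdots\sigma_n$. A word $a_1\cdots a_m$ is initially dominated if $a_1>a_j$ for all $j\ge2$; every permutation factors uniquely as $\sigma=u_1\cdots u_r$ into initially dominated words with increasing first letters, and $\mathrm{SC}(\sigma)=(|u_1|,\ldots,|u_r|)$ is its saillance composition. Pattern replacements act on letters in adjacent positions. *)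

theory Defs
  imports Main
begin

definition is_perm :: "nat \<Rightarrow> nat list \<Rightarrow> bool" where
  "is_perm n w \<longleftrightarrow> distinct w \<and> set w = {1..n}"

text \<open>Inverse permutation: the letter at position v (1-based) is the position of v in w.\<close>
definition perm_inv :: "nat list \<Rightarrow> nat list" where
  "perm_inv w = map (\<lambda>v. Suc (LEAST i. i < length w \<and> w ! i = v)) [1..<Suc (length w)]"

definition init_dominated :: "nat list \<Rightarrow> bool" where
  "init_dominated u \<longleftrightarrow> u \<noteq> [] \<and> (\<forall>j. 1 \<le> j \<and> j < length u \<longrightarrow> u ! j < u ! 0)"

definition sc_factorization :: "nat list \<Rightarrow> nat list list \<Rightarrow> bool" where
  "sc_factorization w us \<longleftrightarrow> concat us = w \<and> (\<forall>u\<in>set us. init_dominated u)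
     \<and> sorted_wrt (<) (map hd us)"

text \<open>Saillance composition: lengths of the factors of the unique factorisation.\<close>
definition SC :: "nat list \<Rightarrow> nat list" where
  "SC w = (THE c. \<exists>us. sc_factorization w us \<and> c = map length us)"

definition repl_step :: "nat list \<Rightarrow> nat list \<Rightarrow> bool" where
  "repl_step v w \<longleftrightarrow> (\<exists>xs ys a b c. a < b \<and> b < c \<and>
      ((v = xs @ [c, b, a] @ ys \<and> w = xs @ [b, c, a] @ ys) \<or>
       (v = xs @ [c, a, b] @ ys \<and> w = xs @ [a, c, b] @ ys)))"

definition perm_equiv :: "nat list \<Rightarrow> nat list \<Rightarrow> bool" where
  "perm_equiv = equivclp repl_step"

end

theory Submission
  imports Defs
begin

fun rlmin :: "nat list \<Rightarrow> nat set" where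
  "rlmin [] = {}"
| "rlmin (x # xs) = (if (\<forall>u\<in>set xs. x < u) then insert x (rlmin xs) else rlmin xs)"

lemma rlmin_append: "rlmin (xs @ ys) = {x\<in>rlmin xs. \<forall>u\<in>set ys. x < u} \<union> rlmin ys"
  by (induction xs) auto

lemma rlmin_subset: "rlmin xs \<subseteq> set xs"
  by (induction xs) auto

lemma repl_step_rlmin: "repl_step v w \<Longrightarrow> rlmin v = rlmin w"
  unfolding repl_step_def
  by (elim exE conjE disjE) (auto simp: rlmin_append)

lemma equiv_rlmin: "perm_equiv v w \<Longrightarrow> rlmin v = rlmin w"
  unfolding perm_equiv_def
  by (induction rule: equivclp_induct) (auto dest: repl_step_rlmin)

lemma repl_step_lift: "repl_step v w \<Longrightarrow> repl_step (p @ v @ q) (p @ w @ q)"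
  unfolding repl_step_def
  apply (elim exE conjE disjE)
   apply (rule_tac x="p @ xs" in exI, rule_tac x="ys @ q" in exI, force)+
  done

lemma equiv_lift: "perm_equiv v w \<Longrightarrow> perm_equiv (p @ v @ q) (p @ w @ q)"
  unfolding perm_equiv_def
proof (induction rule: equivclp_induct)
  case base thus ?case by simp
next
  case (step y z)
  thus ?case using repl_step_lift equivclp_into_equivclp by metis
qed

lemma move_front:
  assumes "distinct (xs @ ys)" "ys \<noteq> []" "\<forall>x\<in>set (xs @ ys). x < N"
  shows "perm_equiv (xs @ N # ys) (N # xs @ ys)"
  using assms
proof (induction xs)
  case Nil thus ?case by (simp add: perm_equiv_def)
next
  case (Cons x xs)
  then have ih: "perm_equiv (xs @ N # ys) (N # xs @ ys)" by auto
  have 1: "perm_equiv (x # xs @ N # ys) (x # N # xs @ ys)"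
    using equiv_lift[OF ih, of "[x]" "[]"] by simp
  obtain z zs where z: "xs @ ys = z # zs" using Cons.prems(2) by (cases "xs @ ys") auto
  have xz: "x \<noteq> z" "x < N" "z < N" using Cons.prems z by (auto simp: set_eq_iff) 
  have "repl_step (N # x # z # zs) (x # N # z # zs)"
    unfolding repl_step_def
  proof (cases "z < x")
    case True
    then show "\<exists>xsa ys a b c. a < b \<and> b < c \<and> (N # x # z # zs = xsa @ [c, b, a] @ ys \<and> x # N # z # zs = xsa @ [b, c, a] @ ys \<or>
       N # x # z # zs = xsa @ [c, a, b] @ ys \<and> x # N # z # zs = xsa @ [a, c, b] @ ys)"
      using xz by (intro exI[of _ "[]"] exI[of _ zs] exI[of _ z] exI[of _ x] exI[of _ N]) auto
  next
    case False
    then show "\<exists>xsa ys a b c. a < b \<and> b < c \<and> (N # x # z # zs = xsa @ [c, b, a] @ ys \<and> x # N # z # zs = xsa @ [b, c, a] @ ys \<or>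
       N # x # z # zs = xsa @ [c, a, b] @ ys \<and> x # N # z # zs = xsa @ [a, c, b] @ ys)"
      using xz by (intro exI[of _ "[]"] exI[of _ zs] exI[of _ x] exI[of _ z] exI[of _ N]) auto
  qed
  then have "perm_equiv (x # N # xs @ ys) (N # x # xs @ ys)"
    unfolding perm_equiv_def using z by (metis append_Cons converse_r_into_equivclp)
  with 1 show ?case unfolding perm_equiv_def by (metis append_Cons equivclp_trans)
qed

lemma perm_split:
  assumes "is_perm (Suc n) \<sigma>"
  shows "\<exists>xs ys. \<sigma> = xs @ Suc n # ys \<and> is_perm n (xs @ ys)"
proof -
  have "Suc n \<in> set \<sigma>" using assms by (auto simp: is_perm_def)
  then obtain xs ys where s: "\<sigma> = xs @ Suc n # ys" by (meson split_list)
  have d: "distinct (xs @ Suc n # ys)" and st: "set (xs @ Suc n # ys) = {1..Suc n}"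
    using assms s by (auto simp: is_perm_def)
  have "set (xs @ ys) = {1..Suc n} - {Suc n}" using d st by auto
  also have "... = {1..n}" by auto
  finally have "is_perm n (xs @ ys)" using d by (simp add: is_perm_def)
  with s show ?thesis by blast
qed

lemma C: "is_perm n \<sigma> \<Longrightarrow> is_perm n \<tau> \<Longrightarrow> rlmin \<sigma> = rlmin \<tau> \<Longrightarrow> perm_equiv \<sigma> \<tau>"
proof (induction n arbitrary: \<sigma> \<tau>)
  case 0
  then show ?case by (simp add: is_perm_def perm_equiv_def)
next
  case (Suc n)
  define N where "N = Suc n"
  obtain xs ys where s: "\<sigma> = xs @ N # ys" and ps: "is_perm n (xs @ ys)"
    using perm_split[OF Suc.prems(1)] N_def by blast
  obtain xs' ys' where t: "\<tau> = xs' @ N # ys'" and pt: "is_perm n (xs' @ ys')"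
    using perm_split[OF Suc.prems(2)] N_def by blast
  have lt: "\<forall>x\<in>set (xs@ys). x < N" "\<forall>x\<in>set (xs'@ys'). x < N"
    using ps pt by (auto simp: is_perm_def N_def)
  have nN: "N \<notin> rlmin (xs@ys)" "N \<notin> rlmin (xs'@ys')"
    using lt rlmin_subset by blast+
  have case1: "rlmin (zs @ [N]) = insert N (rlmin zs)" if "\<forall>x\<in>set zs. x < N" for zs
    using that rlmin_subset by (fastforce simp: rlmin_append)
  have case2: "perm_equiv (as @ N # bs) (N # as @ bs) \<and> rlmin (as @ N # bs) = rlmin (as @ bs)"
    if h: "is_perm n (as @ bs)" "bs \<noteq> []" "\<forall>x\<in>set (as@bs). x < N" for as bs
  proof
    show e: "perm_equiv (as @ N # bs) (N # as @ bs)"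
      using move_front that by (auto simp: is_perm_def)
    obtain b where "b \<in> set (as @ bs)" using h(2) by (cases bs) auto
    then have "\<not> (\<forall>u\<in>set (as@bs). N < u)" using h(3) by (meson less_asym)
    then have "rlmin (N # as @ bs) = rlmin (as @ bs)" by (simp only: rlmin.simps if_False)
    then show "rlmin (as @ N # bs) = rlmin (as @ bs)" using equiv_rlmin[OF e] by simp
  qed
  show ?case
  proof (cases "ys = []")
    case True
    then have r1: "rlmin \<sigma> = insert N (rlmin xs)" using s case1 lt by simp
    show ?thesis
    proof (cases "ys' = []")
      case True
      then have "rlmin \<tau> = insert N (rlmin xs')" using t case1 lt by simp
      then have "rlmin xs = rlmin xs'" using r1 Suc.prems(3) nN \<open>ys = []\<close> True
        by (metis append_Nil2 insert_ident)
      then have "perm_equiv xs xs'" using Suc.IH ps pt \<open>ys = []\<close> True by simp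
      then show ?thesis using equiv_lift[of xs xs' "[]" "[N]"] s t \<open>ys = []\<close> True by simp
    next
      case False
      then have "rlmin \<tau> = rlmin (xs'@ys')" using case2 pt lt t by blast
      then show ?thesis using r1 Suc.prems(3) nN by auto
    qed
  next
    case False
    then have c2: "perm_equiv \<sigma> (N # xs @ ys)" "rlmin \<sigma> = rlmin (xs@ys)" using case2 ps lt s by blast+
    show ?thesis
    proof (cases "ys' = []")
      case True
      then have "rlmin \<tau> = insert N (rlmin xs')" using t case1 lt by simp
      then show ?thesis using c2 Suc.prems(3) nN by auto
    next
      case False
      then have c2': "perm_equiv \<tau> (N # xs' @ ys')" "rlmin \<tau> = rlmin (xs'@ys')" using case2 pt lt t by blast+
      then have "perm_equiv (xs@ys) (xs'@ys')" using Suc.IH ps pt c2 Suc.prems(3) by simp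
      then have "perm_equiv (N # xs@ys) (N # xs'@ys')" using equiv_lift[of _ _ "[N]" "[]"] by simp
      then show ?thesis using c2 c2' unfolding perm_equiv_def by (meson equivclp_sym equivclp_trans)
    qed
  qed
qed

function fct :: "nat list \<Rightarrow> nat list list" where
  "fct [] = []"
| "fct (x # xs) = (x # takeWhile (\<lambda>y. y < x) xs) # fct (dropWhile (\<lambda>y. y < x) xs)"
  by pat_completeness auto
termination
  by (relation "measure length") (auto simp: le_imp_less_Suc length_dropWhile_le)

lemma init_dom_iff: "init_dominated (x # t) \<longleftrightarrow> (\<forall>y\<in>set t. y < x)"
proof -
  have "(\<forall>j. 1 \<le> j \<and> j < length (x # t) \<longrightarrow> (x # t) ! j < (x # t) ! 0) \<longleftrightarrow> (\<forall>y\<in>set t. y < x)"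
  proof
    assume h: "\<forall>j. 1 \<le> j \<and> j < length (x # t) \<longrightarrow> (x # t) ! j < (x # t) ! 0"
    show "\<forall>y\<in>set t. y < x"
    proof
      fix y assume "y \<in> set t"
      then obtain i where "i < length t" "t ! i = y" by (auto simp: in_set_conv_nth)
      then show "y < x" using h[rule_format, of "Suc i"] by simp
    qed
  next
    assume h: "\<forall>y\<in>set t. y < x"
    show "\<forall>j. 1 \<le> j \<and> j < length (x # t) \<longrightarrow> (x # t) ! j < (x # t) ! 0"
    proof (intro allI impI)
      fix j assume j: "1 \<le> j \<and> j < length (x # t)"
      then obtain i where "j = Suc i" by (cases j) auto
      then show "(x # t) ! j < (x # t) ! 0" using h j by simp
    qed
  qed
  then show ?thesis unfolding init_dominated_def by simp
qed

lemma tw_split: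
  fixes x :: nat
  assumes "\<forall>y\<in>set t. y < x" "r = [] \<or> x \<le> hd r"
  shows "takeWhile (\<lambda>y. y < x) (t @ r) = t \<and> dropWhile (\<lambda>y. y < x) (t @ r) = r"
  using assms by (cases r) (auto simp: takeWhile_append2 dropWhile_append2 leD)

lemma fct_unique: "sc_factorization w us \<Longrightarrow> us = fct w"
proof (induction us arbitrary: w)
  case Nil
  then show ?case by (simp add: sc_factorization_def)
next
  case (Cons u us)
  have u: "init_dominated u" and w: "w = u @ concat us" and srt: "sorted_wrt (<) (map hd (u # us))"
    and idr: "\<forall>v\<in>set us. init_dominated v"
    using Cons.prems by (auto simp: sc_factorization_def)
  obtain x t where xt: "u = x # t" using u by (cases u) (auto simp: init_dominated_def)
  have tl: "\<forall>y\<in>set t. y < x" using u xt init_dom_iff by simp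
  have hd: "concat us = [] \<or> x < hd (concat us)"
  proof (cases us)
    case (Cons v vs)
    then have "v \<noteq> []" using idr by (auto simp: init_dominated_def)
    then show ?thesis using srt xt Cons by (cases v) auto
  qed simp
  have tw: "takeWhile (\<lambda>y. y < x) (t @ concat us) = t"
   and dw: "dropWhile (\<lambda>y. y < x) (t @ concat us) = concat us"
    using tw_split[OF tl, of "concat us"] hd by auto
  have "sc_factorization (concat us) us"
    using Cons.prems by (auto simp: sc_factorization_def)
  then have "us = fct (concat us)" using Cons.IH by blast
  then show ?case using w xt tw dw by simp
qed

lemma fct_heads: "\<forall>h\<in>set (map hd (fct r)). hd r \<le> h"
proof (induction r rule: fct.induct)
  case 1 then show ?case by simp
next
  case (2 x xs)
  define D where "D = dropWhile (\<lambda>y. y < x) xs"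
  have ih: "\<forall>h\<in>set (map hd (fct D)). hd D \<le> h" using 2 unfolding D_def .
  have "D = [] \<or> x \<le> hd D" unfolding D_def
    by (metis hd_dropWhile not_le_imp_less)
  then have "\<forall>h\<in>set (map hd (fct D)). x \<le> h"
  proof
    assume "D = []" then show ?thesis by simp
  next
    assume "x \<le> hd D" then show ?thesis using ih le_trans by blast
  qed
  then show ?case unfolding D_def by simp
qed

lemma fct_exists: "distinct w \<Longrightarrow> sc_factorization w (fct w)"
proof (induction w rule: fct.induct)
  case 1 then show ?case by (simp add: sc_factorization_def)
next
  case (2 x xs)
  define r where "r = dropWhile (\<lambda>y. y < x) xs"
  have dr: "distinct r" using 2(2) unfolding r_def
    by (metis distinct.simps(2) distinct_append takeWhile_dropWhile_id)
  have ih: "sc_factorization r (fct r)" using 2(1) dr r_def by blast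
  have xr: "x \<notin> set r" using 2(2) unfolding r_def using set_dropWhileD by fastforce
  have hr: "r = [] \<or> x < hd r"
    using xr unfolding r_def
    by (metis hd_dropWhile hd_in_set le_neq_implies_less not_le_imp_less)
  have "\<forall>h\<in>set (map hd (fct r)). x < h"
    using fct_heads[of r] hr by (cases r) auto
  then show ?case using ih unfolding sc_factorization_def r_def[symmetric]
    by (auto simp: init_dom_iff r_def dest: set_takeWhileD)
qed

lemma SC_fct: "distinct w \<Longrightarrow> SC w = map length (fct w)"
  unfolding SC_def
  by (rule the_equality) (auto intro: fct_exists dest: fct_unique)

fun mk :: "nat \<Rightarrow> nat list \<Rightarrow> bool list" where
  "mk m [] = []"
| "mk m (x # xs) = (m < x) # mk (max m x) xs"

fun enc :: "nat list \<Rightarrow> bool list" where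
  "enc [] = []"
| "enc (k # ks) = True # replicate (k - 1) False @ enc ks"

lemma mk_small: "\<forall>y\<in>set t. y < x \<Longrightarrow> mk x (t @ r) = replicate (length t) False @ mk x r"
  by (induction t) (auto simp: max_def)

lemma mk_fct: "distinct w \<Longrightarrow> (w \<noteq> [] \<longrightarrow> m < hd w) \<Longrightarrow> mk m w = enc (map length (fct w))"
proof (induction w arbitrary: m rule: fct.induct)
  case 1 then show ?case by simp
next
  case (2 x xs)
  define r where "r = dropWhile (\<lambda>y. y < x) xs"
  define t where "t = takeWhile (\<lambda>y. y < x) xs"
  have xs: "xs = t @ r" unfolding r_def t_def by simp
  have tl: "\<forall>y\<in>set t. y < x" unfolding t_def by (auto dest: set_takeWhileD)
  have dr: "distinct r" using 2(2) unfolding r_def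
    by (metis distinct.simps(2) distinct_append takeWhile_dropWhile_id)
  have xr: "x \<notin> set r" using 2(2) unfolding r_def using set_dropWhileD by fastforce
  have hr: "r = [] \<or> x < hd r"
    using xr unfolding r_def
    by (metis hd_dropWhile hd_in_set le_neq_implies_less not_le_imp_less)
  have ih: "mk x r = enc (map length (fct r))" using 2(1)[of x] dr hr unfolding r_def by blast
  have "mk m (x # xs) = True # mk x (t @ r)" using 2(3) xs by (simp add: max_def)
  also have "... = True # replicate (length t) False @ mk x r" using mk_small[OF tl] by simp
  finally have calc: "mk m (x # xs) = True # replicate (length t) False @ mk x r" .
  have f: "fct (x # xs) = (x # t) # fct r" by (simp add: t_def r_def)
  show ?case unfolding calc ih f by simp
qed

lemma rep_eq:
  "replicate a False @ xs = replicate b False @ ys \<Longrightarrow> (xs = [] \<or> hd xs) \<Longrightarrow> (ys = [] \<or> hd ys)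
   \<Longrightarrow> a = b \<and> xs = ys"
proof (induction a arbitrary: b)
  case 0 then show ?case by (cases b) auto
next
  case (Suc a) then show ?case by (cases b) auto
qed

lemma enc_hd: "enc ks = [] \<or> hd (enc ks)"
  by (cases ks) auto

lemma enc_inj: "\<forall>k\<in>set ks. 0 < k \<Longrightarrow> \<forall>k\<in>set ks'. 0 < k \<Longrightarrow> enc ks = enc ks' \<Longrightarrow> ks = ks'"
proof (induction ks arbitrary: ks')
  case Nil then show ?case by (cases ks') auto
next
  case (Cons k ks)
  then obtain k' ks'' where ks': "ks' = k' # ks''" by (cases ks') auto
  have "replicate (k - 1) False @ enc ks = replicate (k' - 1) False @ enc ks''"
    using Cons.prems ks' by simp
  then have "k - 1 = k' - 1 \<and> enc ks = enc ks''" using rep_eq enc_hd by blast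
  moreover have "0 < k" "0 < k'" using Cons.prems ks' by auto
  ultimately have "k = k'" by linarith
  moreover have "ks = ks''" using Cons.IH Cons.prems ks' \<open>k - 1 = k' - 1 \<and> enc ks = enc ks''\<close> by simp
  ultimately show ?case using ks' by simp
qed

lemma fct_pos: "\<forall>k\<in>set (map length (fct w)). 0 < k"
  by (induction w rule: fct.induct) auto

lemma SC_eq_mk:
  assumes "distinct w" "distinct w'" "w \<noteq> [] \<longrightarrow> 0 < hd w" "w' \<noteq> [] \<longrightarrow> 0 < hd w'"
  shows "SC w = SC w' \<longleftrightarrow> mk 0 w = mk 0 w'"
proof -
  have "SC w = SC w' \<longleftrightarrow> enc (map length (fct w)) = enc (map length (fct w'))"
    using assms SC_fct enc_inj[OF fct_pos fct_pos] by metis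
  also have "... \<longleftrightarrow> mk 0 w = mk 0 w'" using assms mk_fct by simp
  finally show ?thesis .
qed

lemma mk_length: "length (mk m w) = length w"
  by (induction w arbitrary: m) auto

lemma mk_nth: "j < length w \<Longrightarrow> mk m w ! j = (m < w ! j \<and> (\<forall>i<j. w ! i < w ! j))"
proof (induction w arbitrary: m j)
  case Nil then show ?case by simp
next
  case (Cons x xs)
  show ?case
  proof (cases j)
    case 0 then show ?thesis by simp
  next
    case (Suc j')
    then have "mk m (x # xs) ! j = (max m x < xs ! j' \<and> (\<forall>i<j'. xs ! i < xs ! j'))"
      using Cons by simp
    also have "... = (m < (x#xs) ! j \<and> (\<forall>i<j. (x#xs) ! i < (x#xs) ! j))"
      using Suc by (auto simp: less_Suc_eq_0_disj)
    finally show ?thesis .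
  qed
qed

lemma perm_len: "is_perm n \<sigma> \<Longrightarrow> length \<sigma> = n"
proof -
  assume "is_perm n \<sigma>"
  then have d: "distinct \<sigma>" and s: "set \<sigma> = {1..n}" by (auto simp: is_perm_def)
  have "length \<sigma> = card (set \<sigma>)" using distinct_card[OF d] by simp
  also have "... = n" using s by simp
  finally show ?thesis .
qed

lemma pinv_len: "length (perm_inv \<sigma>) = length \<sigma>"
  by (simp add: perm_inv_def del: upt_Suc)

lemma pinv_nth:
  assumes "distinct \<sigma>" "i < length \<sigma>" "\<sigma> ! i = Suc j" "j < length \<sigma>"
  shows "perm_inv \<sigma> ! j = Suc i"
proof -
  have "(LEAST i'. i' < length \<sigma> \<and> \<sigma> ! i' = Suc j) = i"
    apply (rule Least_equality)
    using assms apply simp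
    using assms by (metis nth_eq_iff_index_eq order.refl)
  then show ?thesis using assms(4) by (simp add: perm_inv_def nth_upt del: upt_Suc)
qed

lemma pinv_pos: "0 \<notin> set (perm_inv \<sigma>)"
  by (auto simp: perm_inv_def)

lemma perm_ex: assumes "is_perm n \<sigma>" "j < n" shows "\<exists>k<n. \<sigma> ! k = Suc j"
proof -
  have "Suc j \<in> set \<sigma>" using assms by (auto simp: is_perm_def)
  then show ?thesis using perm_len[OF assms(1)] by (auto simp: in_set_conv_nth)
qed

lemma perm_rng: "is_perm n \<sigma> \<Longrightarrow> k < n \<Longrightarrow> \<sigma> ! k \<in> {1..n}"
  using perm_len by (metis is_perm_def nth_mem)

lemma pinv_distinct:
  assumes "is_perm n \<sigma>" shows "distinct (perm_inv \<sigma>)"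
proof -
  have len: "length \<sigma> = n" using perm_len assms by blast
  have d: "distinct \<sigma>" using assms by (simp add: is_perm_def)
  show ?thesis unfolding distinct_conv_nth pinv_len len
  proof (intro allI impI)
    fix a b assume ab: "a < n" "b < n" "a \<noteq> b"
    obtain ka where ka: "ka < n" "\<sigma> ! ka = Suc a" using perm_ex assms ab by blast
    obtain kb where kb: "kb < n" "\<sigma> ! kb = Suc b" using perm_ex assms ab by blast
    have "perm_inv \<sigma> ! a = Suc ka" "perm_inv \<sigma> ! b = Suc kb"
      using pinv_nth d len ka kb ab by auto
    moreover have "ka \<noteq> kb" using ka kb ab by auto
    ultimately show "perm_inv \<sigma> ! a \<noteq> perm_inv \<sigma> ! b" by simp
  qed
qed

lemma rlmin_nth:
  assumes "distinct xs" "k < length xs"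
  shows "xs ! k \<in> rlmin xs \<longleftrightarrow> (\<forall>k'. k < k' \<and> k' < length xs \<longrightarrow> xs ! k < xs ! k')"
proof -
  define v where "v = xs ! k"
  define suf where "suf = drop (Suc k) xs"
  have xs: "xs = take k xs @ v # suf" unfolding v_def suf_def using assms(2) by (simp add: id_take_nth_drop)
  have "distinct (take k xs @ v # suf)" using assms(1) xs by metis
  then have vt: "v \<notin> set (take k xs)" and vs: "v \<notin> set suf" by auto
  have "v \<in> rlmin xs \<longleftrightarrow> v \<in> rlmin (v # suf)"
    using vt rlmin_subset by (subst xs) (auto simp: rlmin_append)
  also have "... \<longleftrightarrow> (\<forall>u\<in>set suf. v < u)" using vs rlmin_subset by auto
  also have "... \<longleftrightarrow> (\<forall>k'. k < k' \<and> k' < length xs \<longrightarrow> v < xs ! k')"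
  proof
    assume h: "\<forall>u\<in>set suf. v < u"
    show "\<forall>k'. k < k' \<and> k' < length xs \<longrightarrow> v < xs ! k'"
    proof (intro allI impI)
      fix k' assume kk: "k < k' \<and> k' < length xs"
      then have "suf ! (k' - Suc k) = xs ! k'" "k' - Suc k < length suf" unfolding suf_def by auto
      then show "v < xs ! k'" using h by (metis nth_mem)
    qed
  next
    assume h: "\<forall>k'. k < k' \<and> k' < length xs \<longrightarrow> v < xs ! k'"
    show "\<forall>u\<in>set suf. v < u"
    proof
      fix u assume "u \<in> set suf"
      then obtain i where i: "i < length suf" "suf ! i = u" by (auto simp: in_set_conv_nth)
      then have "u = xs ! (Suc k + i)" "Suc k + i < length xs" unfolding suf_def by auto
      then show "v < u" using h by auto
    qed
  qed
  finally show ?thesis unfolding v_def .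
qed

lemma key:
  assumes p: "is_perm n \<sigma>" and j: "j < n"
  shows "mk 0 (perm_inv \<sigma>) ! j \<longleftrightarrow> Suc j \<in> rlmin \<sigma>"
proof -
  have len: "length \<sigma> = n" using perm_len p by blast
  have d: "distinct \<sigma>" using p by (simp add: is_perm_def)
  obtain k where k: "k < n" "\<sigma> ! k = Suc j" using perm_ex p j by blast
  have pk: "perm_inv \<sigma> ! j = Suc k" using pinv_nth[OF d, of k j] len k j by simp
  have pi: "\<And>i ki. i < n \<Longrightarrow> ki < n \<Longrightarrow> \<sigma> ! ki = Suc i \<Longrightarrow> perm_inv \<sigma> ! i = Suc ki"
    using pinv_nth[OF d] len by simp
  have "mk 0 (perm_inv \<sigma>) ! j \<longleftrightarrow> (\<forall>i<j. perm_inv \<sigma> ! i < Suc k)"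
    using mk_nth[of j "perm_inv \<sigma>" 0] j len pk by (simp add: pinv_len)
  also have "... \<longleftrightarrow> (\<forall>k'. k < k' \<and> k' < n \<longrightarrow> Suc j < \<sigma> ! k')"
  proof
    assume L: "\<forall>i<j. perm_inv \<sigma> ! i < Suc k"
    show "\<forall>k'. k < k' \<and> k' < n \<longrightarrow> Suc j < \<sigma> ! k'"
    proof (intro allI impI)
      fix k' assume kk: "k < k' \<and> k' < n"
      have r: "\<sigma> ! k' \<in> {1..n}" using perm_rng p kk by blast
      have ne: "\<sigma> ! k' \<noteq> Suc j" using nth_eq_iff_index_eq[OF d, of k' k] k kk len by auto
      show "Suc j < \<sigma> ! k'"
      proof (rule ccontr)
        assume "\<not> Suc j < \<sigma> ! k'"
        then have i: "\<sigma> ! k' = Suc (\<sigma> ! k' - 1)" "\<sigma> ! k' - 1 < j" using r ne by auto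
        define i where "i = \<sigma> ! k' - 1"
        note i = i[folded i_def]
        then have "perm_inv \<sigma> ! i = Suc k'" using pi j kk by auto
        then show False using L i kk by auto
      qed
    qed
  next
    assume R: "\<forall>k'. k < k' \<and> k' < n \<longrightarrow> Suc j < \<sigma> ! k'"
    show "\<forall>i<j. perm_inv \<sigma> ! i < Suc k"
    proof (intro allI impI)
      fix i assume i: "i < j"
      obtain ki where ki: "ki < n" "\<sigma> ! ki = Suc i" using perm_ex p i j by (meson less_trans)
      have "ki \<noteq> k" using ki k i by auto
      moreover have "\<not> k < ki"
      proof
        assume "k < ki"
        then have "Suc j < \<sigma> ! ki" using R ki by blast
        then show False using ki i by simp
      qed
      ultimately have "ki < k" by simp
      then show "perm_inv \<sigma> ! i < Suc k" using pi ki i j by auto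
    qed
  qed
  also have "... \<longleftrightarrow> Suc j \<in> rlmin \<sigma>"
    using rlmin_nth[of \<sigma> k] d k len by simp
  finally show ?thesis .
qed

theorem mainTheorem4:
  fixes n :: nat and \<sigma> \<tau> :: "nat list"
  assumes "is_perm n \<sigma>" and "is_perm n \<tau>"
  shows "SC (perm_inv \<sigma>) = SC (perm_inv \<tau>) \<longleftrightarrow> perm_equiv \<sigma> \<tau>"
proof -
  have hp: "perm_inv x \<noteq> [] \<longrightarrow> 0 < hd (perm_inv x)" for x
    using pinv_pos by (metis hd_in_set gr0I)
  have "SC (perm_inv \<sigma>) = SC (perm_inv \<tau>) \<longleftrightarrow> mk 0 (perm_inv \<sigma>) = mk 0 (perm_inv \<tau>)"
    using SC_eq_mk pinv_distinct assms hp by blast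
  also have "... \<longleftrightarrow> rlmin \<sigma> = rlmin \<tau>"
  proof
    assume e: "mk 0 (perm_inv \<sigma>) = mk 0 (perm_inv \<tau>)"
    have "v \<in> rlmin \<sigma> \<longleftrightarrow> v \<in> rlmin \<tau>" for v
    proof (cases "v \<in> {1..n}")
      case True
      then obtain j where "v = Suc j" "j < n" by (cases v) auto
      then show ?thesis using key[OF assms(1) \<open>j < n\<close>] key[OF assms(2) \<open>j < n\<close>] e by simp
    next
      case False
      then show ?thesis using rlmin_subset assms unfolding is_perm_def by blast
    qed
    then show "rlmin \<sigma> = rlmin \<tau>" by blast
  next
    assume e: "rlmin \<sigma> = rlmin \<tau>"
    show "mk 0 (perm_inv \<sigma>) = mk 0 (perm_inv \<tau>)"
    proof (rule nth_equalityI)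
      show "length (mk 0 (perm_inv \<sigma>)) = length (mk 0 (perm_inv \<tau>))"
        using assms by (simp add: mk_length pinv_len perm_len)
      fix j assume "j < length (mk 0 (perm_inv \<sigma>))"
      then have "j < n" using assms by (simp add: mk_length pinv_len perm_len)
      then show "mk 0 (perm_inv \<sigma>) ! j = mk 0 (perm_inv \<tau>) ! j"
        using key[OF assms(1) \<open>j < n\<close>] key[OF assms(2) \<open>j < n\<close>] e by simp
    qed
  qed
  also have "... \<longleftrightarrow> perm_equiv \<sigma> \<tau>"
    using C equiv_rlmin assms by blast
  finally show ?thesis .
qed

end
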